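(* Let $f:\mathcal{P}^n\to X$ be an onto, efficient, anonymous and tops-only rule. Then $f$ is NOM if and only if either $V_i=\emptyset$ for each $i\in N$, or there is $y\in X$ such that $SV_i=V_i=\{y\}$ for each $i\in N$.
   Context: $N=\{1,\dots,n\}$, $n\ge2$, agents; $X$ finite alternatives, $|X|\ge2$; $\mathcal{P}$ all strict linear orders on $X$; $t(P_i)$ the top of $P_i$. A rule $f:\mathcal{P}^n\to X$ is onto; tops-only if $f(P)=f(P')$ whenever all tops coincide; efficient if for each $P$ there is no $x$ with $xP_if(P)$ for all $i$; anonymous if $f(P_1,\dots,P_n)=f(P_{\sigma(1)},\dots,P_{\sigma(n)})$ for every permutation $\sigma$ of $N$. Option set $O^f(P_i)=\{f(P_i,P_{-i}):P_{-i}\in\mathcal{P}^{n-1}\}$. $P_i'$ is a manipulation at $P_i$ if $f(P_i',P_{-i})P_if(P_i,P_{-i})$ for some $P_{-i}$; it is obvious if the $P_i$-worst element of $O^f(P_i')$ is strictly $P_i$-better than that of $O^f(P_i)$, or the $P_i$-best element of $O^f(P_i')$ is strictly $P_i$-better than that of $O^f(P_i)$. $f$ is NOM if there are no obvious manipulations. Agent $i$ vetoes $x$ via $P_i$ if $x\notin O^f(P_i)$; $V_i$ = alternatives $i$ vetoes via some preference; $\mathcal{V}_i^x$ = preferences via which $i$ vetoes $x$; $i$ strongly vetoes $x$ if $\mathcal{V}_i^x=\{P_i:t(P_i)\ne x\}$; $SV_i$ = set of alternatives strongly vetoed by $i$. *)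

theory Defs
  imports Main "HOL-Combinatorics.Permutations"
begin

text \<open>A preference is a strict linear order R on 'x, where (a,b) in R means a is strictly
  preferred to b. A profile is a function from agents to preferences; entries for
  indices >= n are fixed to the empty relation so that profiles correspond exactly
  to elements of the n-fold product of preferences.\<close>

definition prefs :: "('x \<times> 'x) set set" where
  "prefs = {R. strict_linear_order R}"

definition profiles :: "nat \<Rightarrow> (nat \<Rightarrow> ('x \<times> 'x) set) set" where
  "profiles n = {P. (\<forall>i<n. P i \<in> prefs) \<and> (\<forall>i. n \<le> i \<longrightarrow> P i = {})}"

definition pref_top :: "('x \<times> 'x) set \<Rightarrow> 'x" where
  "pref_top R = (THE x. \<forall>y. y \<noteq> x \<longrightarrow> (x, y) \<in> R)"

definition onto :: "nat \<Rightarrow> ((nat \<Rightarrow> ('x \<times> 'x) set) \<Rightarrow> 'x) \<Rightarrow> bool" where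
  "onto n f \<longleftrightarrow> f ` profiles n = UNIV"

definition tops_only :: "nat \<Rightarrow> ((nat \<Rightarrow> ('x \<times> 'x) set) \<Rightarrow> 'x) \<Rightarrow> bool" where
  "tops_only n f \<longleftrightarrow> (\<forall>P\<in>profiles n. \<forall>P'\<in>profiles n.
      (\<forall>i<n. pref_top (P i) = pref_top (P' i)) \<longrightarrow> f P = f P')"

definition efficient :: "nat \<Rightarrow> ((nat \<Rightarrow> ('x \<times> 'x) set) \<Rightarrow> 'x) \<Rightarrow> bool" where
  "efficient n f \<longleftrightarrow> (\<forall>P\<in>profiles n. \<not> (\<exists>x. \<forall>i<n. (x, f P) \<in> P i))"

definition anonymous :: "nat \<Rightarrow> ((nat \<Rightarrow> ('x \<times> 'x) set) \<Rightarrow> 'x) \<Rightarrow> bool" where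
  "anonymous n f \<longleftrightarrow> (\<forall>P\<in>profiles n. \<forall>\<sigma>. \<sigma> permutes {0..<n} \<longrightarrow> f P = f (P \<circ> \<sigma>))"

definition option_set :: "nat \<Rightarrow> ((nat \<Rightarrow> ('x \<times> 'x) set) \<Rightarrow> 'x) \<Rightarrow> nat \<Rightarrow> ('x \<times> 'x) set \<Rightarrow> 'x set" where
  "option_set n f i R = {f (P(i := R)) | P. P \<in> profiles n}"

definition worst :: "('x \<times> 'x) set \<Rightarrow> 'x set \<Rightarrow> 'x" where
  "worst R S = (THE w. w \<in> S \<and> (\<forall>y\<in>S. y \<noteq> w \<longrightarrow> (y, w) \<in> R))"

definition best :: "('x \<times> 'x) set \<Rightarrow> 'x set \<Rightarrow> 'x" where
  "best R S = (THE b. b \<in> S \<and> (\<forall>y\<in>S. y \<noteq> b \<longrightarrow> (b, y) \<in> R))"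

definition manipulation :: "nat \<Rightarrow> ((nat \<Rightarrow> ('x \<times> 'x) set) \<Rightarrow> 'x) \<Rightarrow> nat \<Rightarrow> ('x \<times> 'x) set \<Rightarrow> ('x \<times> 'x) set \<Rightarrow> bool" where
  "manipulation n f i R R' \<longleftrightarrow> (\<exists>P\<in>profiles n. (f (P(i := R')), f (P(i := R))) \<in> R)"

definition obvious_manipulation :: "nat \<Rightarrow> ((nat \<Rightarrow> ('x \<times> 'x) set) \<Rightarrow> 'x) \<Rightarrow> nat \<Rightarrow> ('x \<times> 'x) set \<Rightarrow> ('x \<times> 'x) set \<Rightarrow> bool" where
  "obvious_manipulation n f i R R' \<longleftrightarrow> manipulation n f i R R' \<and>
     ((worst R (option_set n f i R'), worst R (option_set n f i R)) \<in> R \<or>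
      (best R (option_set n f i R'), best R (option_set n f i R)) \<in> R)"

definition NOM :: "nat \<Rightarrow> ((nat \<Rightarrow> ('x \<times> 'x) set) \<Rightarrow> 'x) \<Rightarrow> bool" where
  "NOM n f \<longleftrightarrow> (\<forall>i<n. \<forall>R\<in>prefs. \<forall>R'\<in>prefs. \<not> obvious_manipulation n f i R R')"

definition veto_prefs :: "nat \<Rightarrow> ((nat \<Rightarrow> ('x \<times> 'x) set) \<Rightarrow> 'x) \<Rightarrow> nat \<Rightarrow> 'x \<Rightarrow> ('x \<times> 'x) set set" where
  "veto_prefs n f i x = {R\<in>prefs. x \<notin> option_set n f i R}"

definition vetoed :: "nat \<Rightarrow> ((nat \<Rightarrow> ('x \<times> 'x) set) \<Rightarrow> 'x) \<Rightarrow> nat \<Rightarrow> 'x set" where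
  "vetoed n f i = {x. \<exists>R\<in>prefs. x \<notin> option_set n f i R}"

definition strongly_vetoes :: "nat \<Rightarrow> ((nat \<Rightarrow> ('x \<times> 'x) set) \<Rightarrow> 'x) \<Rightarrow> nat \<Rightarrow> 'x \<Rightarrow> bool" where
  "strongly_vetoes n f i x \<longleftrightarrow> veto_prefs n f i x = {R\<in>prefs. pref_top R \<noteq> x}"

definition strongly_vetoed :: "nat \<Rightarrow> ((nat \<Rightarrow> ('x \<times> 'x) set) \<Rightarrow> 'x) \<Rightarrow> nat \<Rightarrow> 'x set" where
  "strongly_vetoed n f i = {x. strongly_vetoes n f i x}"

end

theory Submission
  imports Defs
begin

lemma prefsD:
  assumes "R \<in> prefs"
  shows "trans R" "irrefl R" "\<And>x y. x \<noteq> y \<Longrightarrow> (x,y) \<in> R \<or> (y,x) \<in> R"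
  using assms by (auto simp: prefs_def strict_linear_order_on_def total_on_def)

lemma prefs_asym: "R \<in> prefs \<Longrightarrow> (x,y) \<in> R \<Longrightarrow> (y,x) \<notin> R"
  using prefsD by (metis irrefl_def transD)

lemma prefs_irr: "R \<in> prefs \<Longrightarrow> (x,x) \<notin> R"
  using prefsD by (metis irrefl_def)

lemma exists_worst:
  assumes "R \<in> prefs" "finite S" "S \<noteq> {}"
  shows "\<exists>w\<in>S. \<forall>y\<in>S. y \<noteq> w \<longrightarrow> (y,w) \<in> R"
  using assms(2,3)
proof (induction S rule: finite_ne_induct)
  case (singleton x) then show ?case by auto
next
  case (insert x F)
  then obtain w where w: "w\<in>F" "\<forall>y\<in>F. y \<noteq> w \<longrightarrow> (y,w) \<in> R" by auto
  show ?case
  proof (cases "(x,w) \<in> R")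
    case True then show ?thesis using w by auto
  next
    case False
    then have "(w,x) \<in> R" using prefsD(3)[OF assms(1), of x w] w insert by auto
    then show ?thesis using w prefsD(1)[OF assms(1)] by (auto dest: transD)
  qed
qed

lemma exists_best:
  assumes "R \<in> prefs" "finite S" "S \<noteq> {}"
  shows "\<exists>w\<in>S. \<forall>y\<in>S. y \<noteq> w \<longrightarrow> (w,y) \<in> R"
  using assms(2,3)
proof (induction S rule: finite_ne_induct)
  case (singleton x) then show ?case by auto
next
  case (insert x F)
  then obtain w where w: "w\<in>F" "\<forall>y\<in>F. y \<noteq> w \<longrightarrow> (w,y) \<in> R" by auto
  show ?case
  proof (cases "(w,x) \<in> R")
    case True then show ?thesis using w by auto
  next
    case False
    then have "(x,w) \<in> R" using prefsD(3)[OF assms(1), of x w] w insert by auto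
    then show ?thesis using w prefsD(1)[OF assms(1)] by (auto dest: transD)
  qed
qed


lemma worst_eq:
  assumes "R \<in> prefs" "w \<in> S" "\<forall>y\<in>S. y \<noteq> w \<longrightarrow> (y,w) \<in> R"
  shows "worst R S = w"
  unfolding worst_def
proof (rule the_equality)
  show "w \<in> S \<and> (\<forall>y\<in>S. y \<noteq> w \<longrightarrow> (y, w) \<in> R)" using assms by blast
  fix v assume v: "v \<in> S \<and> (\<forall>y\<in>S. y \<noteq> v \<longrightarrow> (y, v) \<in> R)"
  show "v = w"
  proof (rule ccontr)
    assume "v \<noteq> w"
    then have "(v,w) \<in> R" "(w,v) \<in> R" using v assms by auto
    then show False using prefs_asym[OF assms(1)] by blast
  qed
qed

lemma worst_prop:
  assumes "R \<in> prefs" "finite S" "S \<noteq> {}"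
  shows "worst R S \<in> S" "\<And>y. y\<in>S \<Longrightarrow> y \<noteq> worst R S \<Longrightarrow> (y, worst R S) \<in> R"
proof -
  obtain w where w: "w\<in>S" "\<forall>y\<in>S. y \<noteq> w \<longrightarrow> (y,w) \<in> R" using exists_worst[OF assms] by blast
  have "worst R S = w" using worst_eq[OF assms(1) w] .
  then show "worst R S \<in> S" "\<And>y. y\<in>S \<Longrightarrow> y \<noteq> worst R S \<Longrightarrow> (y, worst R S) \<in> R" using w by auto
qed

lemma best_eq:
  assumes "R \<in> prefs" "w \<in> S" "\<forall>y\<in>S. y \<noteq> w \<longrightarrow> (w,y) \<in> R"
  shows "best R S = w"
  unfolding best_def
proof (rule the_equality)
  show "w \<in> S \<and> (\<forall>y\<in>S. y \<noteq> w \<longrightarrow> (w, y) \<in> R)" using assms by blast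
  fix v assume v: "v \<in> S \<and> (\<forall>y\<in>S. y \<noteq> v \<longrightarrow> (v, y) \<in> R)"
  show "v = w"
  proof (rule ccontr)
    assume "v \<noteq> w"
    then have "(v,w) \<in> R" "(w,v) \<in> R" using v assms by auto
    then show False using prefs_asym[OF assms(1)] by blast
  qed
qed

lemma top_eq:
  assumes "R \<in> prefs" "\<forall>y. y \<noteq> a \<longrightarrow> (a,y) \<in> R"
  shows "pref_top R = a"
  unfolding pref_top_def
proof (rule the_equality)
  show "\<forall>y. y \<noteq> a \<longrightarrow> (a,y) \<in> R" using assms by blast
  fix v assume v: "\<forall>y. y \<noteq> v \<longrightarrow> (v,y) \<in> R"
  show "v = a"
  proof (rule ccontr)
    assume "v \<noteq> a"
    then have "(v,a) \<in> R" "(a,v) \<in> R" using v assms by auto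
    then show False using prefs_asym[OF assms(1)] by blast
  qed
qed

lemma top_prop:
  assumes "R \<in> prefs"
  shows "\<And>y. y \<noteq> pref_top R \<Longrightarrow> (pref_top R, y) \<in> (R :: ('x::finite \<times> 'x) set)"
proof -
  obtain w where w: "\<forall>y. y \<noteq> w \<longrightarrow> (w,y) \<in> R" using exists_best[OF assms, of UNIV] by auto
  have "pref_top R = w" using top_eq[OF assms w] .
  then show "\<And>y. y \<noteq> pref_top R \<Longrightarrow> (pref_top R, y) \<in> R" using w by auto
qed

lemma exists_pref:
  assumes "(a::'x::finite) \<noteq> z"
  shows "\<exists>R\<in>prefs. pref_top R = a \<and> (\<forall>y. y \<noteq> z \<longrightarrow> (y,z) \<in> R)"
proof -
  obtain r0 :: "'x \<Rightarrow> nat" and m where r0: "r0 ` UNIV = {i. i < m}" "inj r0"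
    using finite_imp_inj_to_nat_seg[of "UNIV :: 'x set"] by auto
  have lt: "r0 y < m" for y using r0(1) by auto
  define r where "r y = (if y = a then 0 else if y = z then m + 1 else r0 y + 1)" for y
  have rinj: "r x = r y \<Longrightarrow> x = y" for x y
  proof -
    assume h: "r x = r y"
    have "r0 x = r0 y \<Longrightarrow> x = y" using r0(2) unfolding inj_def by blast
    then show "x = y" using h lt[of x] lt[of y] assms unfolding r_def by (auto split: if_splits)
  qed
  define R where "R = {(x,y). r x < r y}"
  have tot: "\<forall>x y. x \<noteq> y \<longrightarrow> (x,y) \<in> R \<or> (y,x) \<in> R"
  proof (intro allI impI)
    fix x y :: 'x assume "x \<noteq> y"
    then have "r x \<noteq> r y" using rinj by blast
    then show "(x,y) \<in> R \<or> (y,x) \<in> R" unfolding R_def by auto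
  qed
  have RP: "R \<in> prefs"
    unfolding prefs_def strict_linear_order_on_def total_on_def
    using tot unfolding trans_def irrefl_def R_def by auto
  have "\<forall>y. y \<noteq> a \<longrightarrow> (a,y) \<in> R" unfolding R_def r_def using assms by auto
  then have "pref_top R = a" using top_eq[OF RP] by blast
  moreover have "\<forall>y. y \<noteq> z \<longrightarrow> (y,z) \<in> R" unfolding R_def r_def using assms lt by auto
  ultimately show ?thesis using RP by blast
qed

lemma exists_pref_top:
  assumes "card (UNIV :: 'x::finite set) \<ge> 2"
  shows "\<exists>R\<in>prefs. pref_top R = (a::'x)"
proof -
  have "\<not> (\<forall>z::'x. z = a)"
  proof
    assume "\<forall>z::'x. z = a"
    then have "card (UNIV :: 'x set) \<le> Suc 0" using card_le_Suc0_iff_eq[of "UNIV :: 'x set"] by (metis finite UNIV_I)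
    then show False using assms by simp
  qed
  then obtain z :: 'x where "z \<noteq> a" by blast
  then show ?thesis using exists_pref[of a z] by metis
qed


lemma prof_upd: "P \<in> profiles n \<Longrightarrow> i < n \<Longrightarrow> R \<in> prefs \<Longrightarrow> P(i := R) \<in> profiles n"
  unfolding profiles_def by auto

lemma const_prof: "R \<in> prefs \<Longrightarrow> (\<lambda>j. if j < n then R else {}) \<in> profiles n"
  unfolding profiles_def by auto

lemma in_tops:
  fixes f :: "(nat \<Rightarrow> ('x::finite \<times> 'x) set) \<Rightarrow> 'x"
  assumes eff: "efficient n f" and to: "tops_only n f" and n: "n \<ge> 1" and P: "P \<in> profiles n"
  shows "\<exists>j<n. f P = pref_top (P j)"
proof (rule ccontr)
  assume H: "\<not> (\<exists>j<n. f P = pref_top (P j))"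
  define z where "z = f P"
  have ex: "\<exists>R. j < n \<longrightarrow> R\<in>prefs \<and> pref_top R = pref_top (P j) \<and> (\<forall>y. y \<noteq> z \<longrightarrow> (y,z) \<in> R)" for j
  proof (cases "j < n")
    case True
    then have "pref_top (P j) \<noteq> z" using H unfolding z_def by auto
    then show ?thesis using exists_pref[of "pref_top (P j)" z] by blast
  qed auto
  then obtain Rs where Rs: "\<And>j. j < n \<Longrightarrow> Rs j \<in> prefs \<and> pref_top (Rs j) = pref_top (P j) \<and> (\<forall>y. y \<noteq> z \<longrightarrow> (y,z) \<in> Rs j)"
    by metis
  define P' where "P' = (\<lambda>j. if j < n then Rs j else {})"
  have P'p: "P' \<in> profiles n" unfolding profiles_def P'_def using Rs by auto
  have tt: "\<forall>i<n. pref_top (P i) = pref_top (P' i)" unfolding P'_def using Rs by auto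
  have "f P = f P'" using to P'p P tt unfolding tops_only_def by blast
  have t0: "pref_top (P 0) \<noteq> z" using H n unfolding z_def by auto
  have "\<forall>i<n. (pref_top (P 0), f P') \<in> P' i"
    using Rs t0 \<open>f P = f P'\<close> unfolding P'_def z_def by auto
  then show False using eff P'p unfolding efficient_def by blast
qed

lemma unanimous:
  fixes f :: "(nat \<Rightarrow> ('x::finite \<times> 'x) set) \<Rightarrow> 'x"
  assumes eff: "efficient n f" and to: "tops_only n f" and n: "n \<ge> 1" and P: "P \<in> profiles n"
    and "\<forall>j<n. pref_top (P j) = a"
  shows "f P = a"
  using in_tops[OF eff to n P] assms(5) by metis

lemma top_in_opt:
  fixes f :: "(nat \<Rightarrow> ('x::finite \<times> 'x) set) \<Rightarrow> 'x"
  assumes eff: "efficient n f" and to: "tops_only n f" and i: "i < n" and R: "R \<in> prefs"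
  shows "pref_top R \<in> option_set n f i R"
proof -
  let ?P = "\<lambda>j. if j < n then R else {}"
  have P: "?P \<in> profiles n" using const_prof[OF R] .
  have "?P(i := R) = ?P" using i by (auto simp: fun_eq_iff)
  moreover have "f ?P = pref_top R" using unanimous[OF eff to _ P] i by auto
  ultimately have "\<exists>Q. pref_top R = f (Q(i := R)) \<and> Q \<in> profiles n" using P by metis
  then show ?thesis unfolding option_set_def by blast
qed


lemma opt_tops:
  fixes f :: "(nat \<Rightarrow> ('x::finite \<times> 'x) set) \<Rightarrow> 'x"
  assumes to: "tops_only n f" and i: "i < n" and R: "R \<in> prefs" and R': "R' \<in> prefs"
    and t: "pref_top R = pref_top R'"
  shows "option_set n f i R = option_set n f i R'"
proof -
  have "f (P(i := R)) = f (P(i := R'))" if "P \<in> profiles n" for P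
  proof -
    have "\<forall>k<n. pref_top ((P(i := R)) k) = pref_top ((P(i := R')) k)" using t by simp
    then show ?thesis using to prof_upd[OF that i R] prof_upd[OF that i R'] unfolding tops_only_def by blast
  qed
  then show ?thesis unfolding option_set_def by metis
qed


lemma opt_sub:
  fixes f :: "(nat \<Rightarrow> ('x::finite \<times> 'x) set) \<Rightarrow> 'x"
  assumes an: "anonymous n f" and i: "i < n" and j: "j < n" and R: "R \<in> prefs"
  shows "option_set n f i R \<subseteq> option_set n f j R"
proof
  fix x assume "x \<in> option_set n f i R"
  then obtain P where P: "P \<in> profiles n" and x: "x = f (P(i := R))" unfolding option_set_def by auto
  define \<sigma> where "\<sigma> = Transposition.transpose i j"
  have perm: "\<sigma> permutes {0..<n}" unfolding \<sigma>_def using i j by (intro permutes_swap_id) auto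
  have x2: "x = f (P(i := R) \<circ> \<sigma>)" using an prof_upd[OF P i R] perm x unfolding anonymous_def by blast
  have e: "P(i := R) \<circ> \<sigma> = (P \<circ> \<sigma>)(j := R)"
  proof
    fix k show "(P(i := R) \<circ> \<sigma>) k = ((P \<circ> \<sigma>)(j := R)) k"
      unfolding \<sigma>_def by (cases "k = j"; cases "k = i"; simp add: transpose_def)
  qed
  have "P \<circ> \<sigma> \<in> profiles n"
    unfolding profiles_def
  proof (intro CollectI conjI allI impI)
    fix k assume "k < n"
    then have "\<sigma> k < n" using i j unfolding \<sigma>_def by (simp add: transpose_def)
    then show "(P \<circ> \<sigma>) k \<in> prefs" using P unfolding profiles_def by simp
  next
    fix k assume "n \<le> k"
    then have "\<sigma> k = k" using i j unfolding \<sigma>_def by (simp add: transpose_def)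
    then show "(P \<circ> \<sigma>) k = {}" using P \<open>n \<le> k\<close> unfolding profiles_def by simp
  qed
  moreover have "x = f ((P \<circ> \<sigma>)(j := R))" using x2 e by simp
  ultimately show "x \<in> option_set n f j R" unfolding option_set_def by blast
qed

lemma opt_sym:
  fixes f :: "(nat \<Rightarrow> ('x::finite \<times> 'x) set) \<Rightarrow> 'x"
  assumes an: "anonymous n f" and i: "i < n" and j: "j < n" and R: "R \<in> prefs"
  shows "option_set n f i R = option_set n f j R"
  using opt_sub[OF an i j R] opt_sub[OF an j i R] by blast


lemma opt_eq0:
  fixes f :: "(nat \<Rightarrow> ('x::finite \<times> 'x) set) \<Rightarrow> 'x"
  assumes an: "anonymous n f" and i: "i < n"
  shows "vetoed n f i = vetoed n f 0" "strongly_vetoed n f i = strongly_vetoed n f 0"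
proof -
  have n0: "0 < n" using i by simp
  have e: "\<And>R. R \<in> prefs \<Longrightarrow> option_set n f i R = option_set n f 0 R" using opt_sym[OF an i n0] by blast
  show "vetoed n f i = vetoed n f 0" unfolding vetoed_def using e by blast
  have "veto_prefs n f i x = veto_prefs n f 0 x" for x unfolding veto_prefs_def using e by blast
  then show "strongly_vetoed n f i = strongly_vetoed n f 0"
    unfolding strongly_vetoed_def strongly_vetoes_def by simp
qed

lemma strong:
  fixes f :: "(nat \<Rightarrow> ('x::finite \<times> 'x) set) \<Rightarrow> 'x"
  assumes eff: "efficient n f" and to: "tops_only n f" and nom: "NOM n f" and i: "i < n"
    and Ra: "Ra \<in> prefs" and xa: "x \<notin> option_set n f i Ra"
    and R: "R \<in> prefs" and tR: "pref_top R \<noteq> x"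
  shows "x \<notin> option_set n f i R"
proof
  assume xR: "x \<in> option_set n f i R"
  obtain R0 where R0: "R0 \<in> prefs" "pref_top R0 = pref_top R" "\<forall>y. y \<noteq> x \<longrightarrow> (y,x) \<in> R0"
    using exists_pref[OF tR] by blast
  have O0: "option_set n f i R0 = option_set n f i R" using opt_tops[OF to i R0(1) R] R0(2) by simp
  have "x \<in> option_set n f i R0" using xR O0 by simp
  then obtain P where P: "P \<in> profiles n" "x = f (P(i := R0))" unfolding option_set_def by blast
  have "f (P(i := Ra)) \<in> option_set n f i Ra" unfolding option_set_def using P by blast
  then have "f (P(i := Ra)) \<noteq> x" using xa by auto
  then have "(f (P(i := Ra)), f (P(i := R0))) \<in> R0" using P(2) R0(3) by simp
  then have man: "manipulation n f i R0 Ra" unfolding manipulation_def using P(1) by blast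
  have w0: "worst R0 (option_set n f i R0) = x"
    using worst_eq[OF R0(1), of x] xR O0 R0(3) by auto
  have ne: "option_set n f i Ra \<noteq> {}" using top_in_opt[OF eff to i Ra] by auto
  have "worst R0 (option_set n f i Ra) \<in> option_set n f i Ra"
    using worst_prop(1)[OF R0(1) _ ne] by simp
  then have "worst R0 (option_set n f i Ra) \<noteq> x" using xa by auto
  then have "(worst R0 (option_set n f i Ra), worst R0 (option_set n f i R0)) \<in> R0"
    using w0 R0(3) by simp
  then have "obvious_manipulation n f i R0 Ra" unfolding obvious_manipulation_def using man by blast
  then show False using nom i R0(1) Ra unfolding NOM_def by blast
qed

lemma two_elems:
  assumes "card (UNIV :: 'x::finite set) \<ge> 2"
  shows "\<exists>z::'x. z \<noteq> a"
proof (rule ccontr)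
  assume "\<not> (\<exists>z::'x. z \<noteq> a)"
  then have "card (UNIV :: 'x set) \<le> Suc 0" using card_le_Suc0_iff_eq[of "UNIV :: 'x set"] by (metis finite)
  then show False using assms by simp
qed

lemma forward0:
  fixes f :: "(nat \<Rightarrow> ('x::finite \<times> 'x) set) \<Rightarrow> 'x"
  assumes n: "n \<ge> 2" and c: "card (UNIV :: 'x set) \<ge> 2"
    and eff: "efficient n f" and an: "anonymous n f" and to: "tops_only n f" and nom: "NOM n f"
    and xV: "x \<in> vetoed n f 0"
  shows "strongly_vetoed n f 0 = {x} \<and> vetoed n f 0 = {x}"
proof -
  have n0: "0 < n" and n1: "1 < n" using n by auto
  have sv: "strongly_vetoes n f 0 z" if zV: "z \<in> vetoed n f 0" for z
  proof -
    obtain Ra where Ra: "Ra \<in> prefs" "z \<notin> option_set n f 0 Ra" using zV unfolding vetoed_def by auto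
    have "veto_prefs n f 0 z = {R\<in>prefs. pref_top R \<noteq> z}"
    proof (intro equalityI subsetI)
      fix R assume "R \<in> veto_prefs n f 0 z"
      then have "R \<in> prefs" "z \<notin> option_set n f 0 R" unfolding veto_prefs_def by auto
      moreover have "pref_top R \<in> option_set n f 0 R" using top_in_opt[OF eff to n0 \<open>R \<in> prefs\<close>] .
      ultimately show "R \<in> {R\<in>prefs. pref_top R \<noteq> z}" by auto
    next
      fix R assume "R \<in> {R\<in>prefs. pref_top R \<noteq> z}"
      then show "R \<in> veto_prefs n f 0 z" unfolding veto_prefs_def
        using strong[OF eff to nom n0 Ra(1) Ra(2)] by auto
    qed
    then show ?thesis unfolding strongly_vetoes_def .
  qed
  have Vsub: "z = x" if zV: "z \<in> vetoed n f 0" for z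
  proof (rule ccontr)
    assume zx: "z \<noteq> x"
    obtain Rx where Rx: "Rx \<in> prefs" "pref_top Rx = x" using exists_pref_top[OF c] by blast
    obtain Rz where Rz: "Rz \<in> prefs" "pref_top Rz = z" using exists_pref_top[OF c] by blast
    have svz: "strongly_vetoes n f 0 z" using sv zV .
    have svx: "strongly_vetoes n f 0 x" using sv xV .
    have "Rx \<in> veto_prefs n f 0 z" using svz Rx zx unfolding strongly_vetoes_def by simp
    then have zno: "z \<notin> option_set n f 0 Rx" unfolding veto_prefs_def by simp
    have "Rz \<in> veto_prefs n f 0 x" using svx Rz zx unfolding strongly_vetoes_def by simp
    then have xno: "x \<notin> option_set n f 0 Rz" unfolding veto_prefs_def by simp
    define P where "P = (\<lambda>j. if j < n then Rz else ({} :: ('x \<times> 'x) set))"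
    have P: "P \<in> profiles n" unfolding P_def using const_prof[OF Rz(1)] .
    define Q where "Q = P(0 := Rx)"
    have Q: "Q \<in> profiles n" unfolding Q_def using prof_upd[OF P n0 Rx(1)] .
    have "f Q \<in> option_set n f 0 Rx" unfolding option_set_def Q_def using P by blast
    then have fz: "f Q \<noteq> z" using zno by auto
    have "Q(1 := Rz) = Q" unfolding Q_def P_def using n1 by (auto simp: fun_eq_iff)
    then have "f Q = f (Q(1 := Rz))" by simp
    then have "f Q \<in> option_set n f 1 Rz" unfolding option_set_def using Q by blast
    then have "f Q \<in> option_set n f 0 Rz" using opt_sym[OF an n1 n0 Rz(1)] by simp
    then have fx: "f Q \<noteq> x" using xno by auto
    obtain k where k: "k < n" "f Q = pref_top (Q k)" using in_tops[OF eff to _ Q] n by auto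
    have "pref_top (Q k) = x \<or> pref_top (Q k) = z" unfolding Q_def P_def using Rx Rz k(1) by auto
    then show False using fx fz k(2) by auto
  qed
  have V: "vetoed n f 0 = {x}" using Vsub xV by blast
  have "y \<in> vetoed n f 0" if "strongly_vetoes n f 0 y" for y
  proof -
    obtain a where a: "a \<noteq> y" using two_elems[OF c] by blast
    obtain R where R: "R \<in> prefs" "pref_top R = a" using exists_pref_top[OF c] by blast
    have "R \<in> veto_prefs n f 0 y" using that R a unfolding strongly_vetoes_def by simp
    then show ?thesis unfolding veto_prefs_def vetoed_def by auto
  qed
  then have "strongly_vetoed n f 0 = {x}" using V sv[OF xV] unfolding strongly_vetoed_def by blast
  then show ?thesis using V by simp
qed


lemma backward:
  fixes f :: "(nat \<Rightarrow> ('x::finite \<times> 'x) set) \<Rightarrow> 'x"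
  assumes c: "card (UNIV :: 'x set) \<ge> 2"
    and eff: "efficient n f" and to: "tops_only n f" and i: "i < n"
    and R: "R \<in> prefs" and R': "R' \<in> prefs"
    and H: "(\<forall>i<n. vetoed n f i = {}) \<or> (\<exists>y. \<forall>i<n. strongly_vetoed n f i = {y} \<and> vetoed n f i = {y})"
  shows "\<not> obvious_manipulation n f i R R'"
proof -
  define OS1 where "OS1 = option_set n f i R"
  define OS2 where "OS2 = option_set n f i R'"
  have tO: "pref_top R \<in> OS1" unfolding OS1_def using top_in_opt[OF eff to i R] .
  have neO: "OS1 \<noteq> {}" using tO by auto
  have neO': "OS2 \<noteq> {}" unfolding OS2_def using top_in_opt[OF eff to i R'] by auto
  have fin: "finite OS1" "finite OS2" by auto
  have bO: "best R OS1 = pref_top R" using best_eq[OF R tO] top_prop[OF R] by blast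
  have best: "(best R OS2, best R OS1) \<notin> R"
  proof
    assume h: "(best R OS2, best R OS1) \<in> R"
    show False
    proof (cases "best R OS2 = pref_top R")
      case True then show False using h bO prefs_irr[OF R] by simp
    next
      case False then show False using h bO top_prop[OF R] prefs_asym[OF R] by metis
    qed
  qed
  define w where "w = worst R OS1"
  have wO: "w \<in> OS1" unfolding w_def using worst_prop(1)[OF R fin(1) neO] .
  have key: "w \<in> OS2"
    using H
  proof
    assume "\<forall>i<n. vetoed n f i = {}"
    then have "vetoed n f i = {}" using i by blast
    then show "w \<in> OS2" unfolding vetoed_def OS2_def using R' by blast
  next
    assume "\<exists>y. \<forall>i<n. strongly_vetoed n f i = {y} \<and> vetoed n f i = {y}"
    then obtain y where y: "strongly_vetoed n f i = {y}" "vetoed n f i = {y}" using i by blast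
    have nv: "z \<in> option_set n f i Q" if "z \<noteq> y" "Q \<in> prefs" for z Q
      using y(2) that unfolding vetoed_def by blast
    show "w \<in> OS2"
    proof (cases "w = y")
      case False then show ?thesis using nv R' unfolding OS2_def by blast
    next
      case True
      have svy: "strongly_vetoes n f i y" using y(1) unfolding strongly_vetoed_def by blast
      have tRy: "pref_top R = y"
      proof (rule ccontr)
        assume "pref_top R \<noteq> y"
        then have "R \<in> veto_prefs n f i y" using svy R unfolding strongly_vetoes_def by simp
        then have "y \<notin> OS1" unfolding veto_prefs_def OS1_def by simp
        then show False using wO True by simp
      qed
      obtain z where z: "z \<noteq> pref_top R" using two_elems[OF c] by blast
      have zO: "z \<in> OS1" using nv[OF _ R, of z] z tRy unfolding OS1_def by simp
      have "(z, w) \<in> R" using worst_prop(2)[OF R fin(1) neO zO] z True tRy unfolding w_def by simp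
      moreover have "(pref_top R, z) \<in> R" using top_prop[OF R] z by blast
      ultimately show ?thesis using True tRy prefs_asym[OF R] by blast
    qed
  qed
  have worst: "(worst R OS2, worst R OS1) \<notin> R"
  proof
    assume h: "(worst R OS2, worst R OS1) \<in> R"
    show False
    proof (cases "worst R OS2 = w")
      case True then show False using h prefs_irr[OF R] unfolding w_def by simp
    next
      case False
      then have "(w, worst R OS2) \<in> R" using worst_prop(2)[OF R fin(2) neO' key] by simp
      then show False using h prefs_asym[OF R] unfolding w_def by blast
    qed
  qed
  show ?thesis using best worst unfolding obvious_manipulation_def OS1_def OS2_def by blast
qed

theorem corollary2:
  fixes n :: nat and f :: "(nat \<Rightarrow> ('x::finite \<times> 'x) set) \<Rightarrow> 'x"
  assumes "n \<ge> 2" and "card (UNIV :: 'x set) \<ge> 2"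
    and "onto n f" and "efficient n f" and "anonymous n f" and "tops_only n f"
  shows "NOM n f \<longleftrightarrow>
    ((\<forall>i<n. vetoed n f i = {}) \<or>
     (\<exists>y. \<forall>i<n. strongly_vetoed n f i = {y} \<and> vetoed n f i = {y}))"
proof
  assume nom: "NOM n f"
  show "(\<forall>i<n. vetoed n f i = {}) \<or> (\<exists>y. \<forall>i<n. strongly_vetoed n f i = {y} \<and> vetoed n f i = {y})"
  proof (cases "vetoed n f 0 = {}")
    case True
    then show ?thesis using opt_eq0(1)[OF assms(5)] by simp
  next
    case False
    then obtain x where x: "x \<in> vetoed n f 0" by blast
    have "strongly_vetoed n f 0 = {x} \<and> vetoed n f 0 = {x}"
      using forward0[OF assms(1,2,4,5,6) nom x] .
    then show ?thesis using opt_eq0[OF assms(5)] by metis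
  qed
next
  assume H: "(\<forall>i<n. vetoed n f i = {}) \<or> (\<exists>y. \<forall>i<n. strongly_vetoed n f i = {y} \<and> vetoed n f i = {y})"
  show "NOM n f" unfolding NOM_def using backward[OF assms(2,4,6) _ _ _ H] by blast
qed

end
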